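(* Dynamic A* (with \texttt{reeval} either true or false) using a dyn-admissible dynamic heuristic returns optimal solutions: whenever it returns a path, that path is a solution of $\mathcal T$ of cost $h^*(s_I)$ (i.e., of minimal cost among all solutions).
   Context: A transition system is $\mathcal T=\langle S,L,c,T,s_I,S_G\rangle$ with finite states $S$, finite labels $L$, cost function $c:L\to\mathbb R_{\ge0}$, transitions $T\subseteq S\times L\times S$, initial state $s_I$, goal states $S_G\subseteq S$. Paths, costs, solutions (paths from $s_I$ to a goal state) are as usual; $h^*(s)$ is the minimal cost of a path from $s$ to a goal ($\infty$ if none). An information source $\sigma$ consists of a set $\mathcal I_\sigma$, $\iota_0^\sigma\in\mathcal I_\sigma$, $\mathrm{update}_\sigma:\mathcal I_\sigma\times T\to\mathcal I_\sigma$, $\mathrm{refine}_\sigma:\mathcal I_\sigma\times S\to\mathcal I_\sigma$. Reachable information: $\iota_n$ is reachable if obtained from $\iota_0^\sigma$ by a sequence of refine steps on states and update steps on transitions $e_1,\dots,e_n$, where each refined state and each origin of an updated transition is $s_I$ or the target of an earlier updated transition. A dynamic heuristic over $\sigma$ is $h:S\times\mathcal I_\sigma\to\mathbb R_{\ge0}\cup\{\infty\}$; it is dyn-admissible if $h(s,\iota)\le h^*(s)$ for all $s$ and all reachable $\iota$. Parent source $\sigma_p$: $\mathcal I_{\sigma_p}$ = partial functions $S\rightharpoonup\mathbb R_{\ge0}\times(T\cup\{\bot\})$; $\iota_0=\{s_I\mapsto\langle0,\bot\rangle\}$; refine is the identity; $\mathrm{update}(\iota,\langle s,\ell,s'\rangle)$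 with $\iota(s)=\langle g,\cdot\rangle$ changes only $s'$, setting it to $\langle g+c(\ell),\langle s,\ell,s'\rangle\rangle$ if $\iota(s')$ is undefined or has $g$-component $\ge g+c(\ell)$, otherwise unchanged. Dynamic A* takes $\mathcal T$, sources $\sigma_p,\sigma_h$, a dynamic heuristic $h$ over $\sigma_h$ and a Boolean flag \texttt{reeval}. Notation: at any moment $g(s)$ is the $g$-component of the current $\mathcal I(\sigma_p)(s)$ and $h(s)$ denotes $h(s,\mathcal I(\sigma_h))$ for the current $\mathcal I(\sigma_h)$. Open is a priority queue of entries $\langle s,g,h\rangle$ (duplicates allowed), popped by minimal stored value $g+h$ (ties arbitrary). Algorithm: 1. $\mathcal I(\sigma):=\iota_0^\sigma$ for both sources; $S_{\mathrm{known}}:=\{s_I\}$; Closed $:=\emptyset$; Open empty. If $h(s_I)<\infty$ insert $\langle s_I,g(s_I),h(s_I)\rangle$. 2. While Open is nonempty: pop an entry $\langle s,\hat g,\hat h\rangle$ of minimal $\hat g+\hat h$. If $s\in$ Closed, continue with the next iteration. Otherwise set $\mathcal I(\sigma):=\mathrm{refine}_\sigma(\mathcal I(\sigma),s)$ for both sources. If \texttt{reeval} is true and $\hat h<h(s)$: if $h(s)<\infty$ insert $\langle s,g(s),h(s)\rangle$; continue with the next iteration (this is a re-evaluation). Otherwise add $s$ to Closed ($s$ is expanded). If $s\in S_G$, return the path obtained by following the parent pointers of $\mathcal I(\sigma_p)$ from $s$ back to $s_I$. Otherwise, for each $t=\langle s,\ell,s'\rangle\in T$ in some order: let $old:=g(s')$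 if $s'\in S_{\mathrm{known}}$ and undefined otherwise; set $\mathcal I(\sigma):=\mathrm{update}_\sigma(\mathcal I(\sigma),t)$ for both sources; add $s'$ to $S_{\mathrm{known}}$; if $h(s')=\infty$ skip $s'$; else if $old$ is undefined insert $\langle s',g(s'),h(s')\rangle$; else if $old>g(s')$, remove $s'$ from Closed if it is there (reopening) and insert $\langle s',g(s'),h(s')\rangle$. 3. Return "unsolvable". *)

theory Defs
  imports Complex_Main "HOL-Library.Multiset" "HOL-Library.Extended_Nonnegative_Real"
begin

text \<open>States and labels are finite types (S = UNIV, L = UNIV).\<close>

record ('s, 'l) tsys =
  ts_T  :: "('s \<times> 'l \<times> 's) set"
  ts_c  :: "'l \<Rightarrow> real"
  ts_sI :: 's
  ts_SG :: "'s set"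

fun path_from :: "('s, 'l) tsys \<Rightarrow> 's \<Rightarrow> ('s \<times> 'l \<times> 's) list \<Rightarrow> 's \<Rightarrow> bool" where
  "path_from TS s [] t = (s = t)"
| "path_from TS s ((a, l, b) # es) t = (a = s \<and> (a, l, b) \<in> ts_T TS \<and> path_from TS b es t)"

definition path_cost :: "('s, 'l) tsys \<Rightarrow> ('s \<times> 'l \<times> 's) list \<Rightarrow> real" where
  "path_cost TS es = sum_list (map (\<lambda>(a, l, b). ts_c TS l) es)"

definition is_solution :: "('s, 'l) tsys \<Rightarrow> ('s \<times> 'l \<times> 's) list \<Rightarrow> bool" where
  "is_solution TS es = (\<exists>t \<in> ts_SG TS. path_from TS (ts_sI TS) es t)"

text \<open>h*(s): infimum (= minimum) of the costs of paths from s to a goal; \<infinity> if none.\<close>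
definition hstar :: "('s, 'l) tsys \<Rightarrow> 's \<Rightarrow> ennreal" where
  "hstar TS s = Inf {ennreal (path_cost TS es) | es t. t \<in> ts_SG TS \<and> path_from TS s es t}"

record ('i, 's, 'l) isrc =
  i_0   :: 'i
  i_upd :: "'i \<Rightarrow> ('s \<times> 'l \<times> 's) \<Rightarrow> 'i"
  i_ref :: "'i \<Rightarrow> 's \<Rightarrow> 'i"

inductive reach_info :: "('s, 'l) tsys \<Rightarrow> ('i, 's, 'l) isrc \<Rightarrow> 'i \<Rightarrow> 's set \<Rightarrow> bool"
  for TS \<sigma> where
  ri_init: "reach_info TS \<sigma> (i_0 \<sigma>) {ts_sI TS}"
| ri_ref: "reach_info TS \<sigma> \<iota> K \<Longrightarrow> s \<in> K \<Longrightarrow> reach_info TS \<sigma> (i_ref \<sigma> \<iota> s) K"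
| ri_upd: "reach_info TS \<sigma> \<iota> K \<Longrightarrow> (s, l, s') \<in> ts_T TS \<Longrightarrow> s \<in> K \<Longrightarrow>
           reach_info TS \<sigma> (i_upd \<sigma> \<iota> (s, l, s')) (insert s' K)"

definition reachable_info :: "('s, 'l) tsys \<Rightarrow> ('i, 's, 'l) isrc \<Rightarrow> 'i \<Rightarrow> bool" where
  "reachable_info TS \<sigma> \<iota> = (\<exists>K. reach_info TS \<sigma> \<iota> K)"

definition dyn_admissible :: "('s, 'l) tsys \<Rightarrow> ('i, 's, 'l) isrc \<Rightarrow> ('s \<Rightarrow> 'i \<Rightarrow> ennreal) \<Rightarrow> bool" where
  "dyn_admissible TS \<sigma> h = (\<forall>s \<iota>. reachable_info TS \<sigma> \<iota> \<longrightarrow> h s \<iota> \<le> hstar TS s)"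

type_synonym ('s, 'l) pinfo = "'s \<Rightarrow> (real \<times> ('s \<times> 'l \<times> 's) option) option"

text \<open>None in the second component represents \<bottom>.  The parent source's refine is the identity.
  Update from an undefined origin (never happens in the algorithm) leaves the information unchanged.\<close>
fun upd_p :: "('s, 'l) tsys \<Rightarrow> ('s, 'l) pinfo \<Rightarrow> ('s \<times> 'l \<times> 's) \<Rightarrow> ('s, 'l) pinfo" where
  "upd_p TS \<iota> (s, l, s') =
     (case \<iota> s of
        None \<Rightarrow> \<iota>
      | Some (g, _) \<Rightarrow>
          (case \<iota> s' of
             None \<Rightarrow> \<iota>(s' \<mapsto> (g + ts_c TS l, Some (s, l, s')))
           | Some (g', _) \<Rightarrow>
               (if g' \<ge> g + ts_c TS l then \<iota>(s' \<mapsto> (g + ts_c TS l, Some (s, l, s'))) else \<iota>)))"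

definition gval :: "('s, 'l) pinfo \<Rightarrow> 's \<Rightarrow> real" where
  "gval \<iota> s = fst (the (\<iota> s))"

text \<open>Following parent pointers from s back to s_I yields the path es (from s_I to s).\<close>
inductive follow :: "('s, 'l) pinfo \<Rightarrow> 's \<Rightarrow> 's \<Rightarrow> ('s \<times> 'l \<times> 's) list \<Rightarrow> bool"
  for \<iota> sI where
  fo_base: "follow \<iota> sI sI []"
| fo_step: "s \<noteq> sI \<Longrightarrow> \<iota> s = Some (g, Some (a, l, s)) \<Longrightarrow> follow \<iota> sI a es \<Longrightarrow>
            follow \<iota> sI s (es @ [(a, l, s)])"

record ('i, 's, 'l) conf =
  c_Ip     :: "('s, 'l) pinfo"
  c_Ih     :: 'i
  c_known  :: "'s set"
  c_closed :: "'s set"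
  c_open   :: "('s \<times> real \<times> ennreal) multiset"

datatype ('i, 's, 'l) res = Run "('i, 's, 'l) conf" | Ret "('s \<times> 'l \<times> 's) list" | Unsolvable

definition okey :: "'s \<times> real \<times> ennreal \<Rightarrow> ennreal" where
  "okey e = ennreal (fst (snd e)) + snd (snd e)"

definition init_conf :: "('s, 'l) tsys \<Rightarrow> ('i, 's, 'l) isrc \<Rightarrow> ('s \<Rightarrow> 'i \<Rightarrow> ennreal) \<Rightarrow> ('i, 's, 'l) conf" where
  "init_conf TS \<sigma> h =
     \<lparr> c_Ip = [ts_sI TS \<mapsto> (0, None)], c_Ih = i_0 \<sigma>, c_known = {ts_sI TS}, c_closed = {},
       c_open = (if h (ts_sI TS) (i_0 \<sigma>) < \<infinity> then {# (ts_sI TS, 0, h (ts_sI TS) (i_0 \<sigma>)) #} else {#}) \<rparr>"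

fun process_trans :: "('s, 'l) tsys \<Rightarrow> ('i, 's, 'l) isrc \<Rightarrow> ('s \<Rightarrow> 'i \<Rightarrow> ennreal) \<Rightarrow>
    ('i, 's, 'l) conf \<Rightarrow> ('s \<times> 'l \<times> 's) \<Rightarrow> ('i, 's, 'l) conf" where
  "process_trans TS \<sigma> h cf (s, l, s') =
     (let old = (if s' \<in> c_known cf then Some (gval (c_Ip cf) s') else None);
          Ip' = upd_p TS (c_Ip cf) (s, l, s');
          Ih' = i_upd \<sigma> (c_Ih cf) (s, l, s');
          cf1 = cf\<lparr> c_Ip := Ip', c_Ih := Ih', c_known := insert s' (c_known cf) \<rparr>;
          hv = h s' Ih'
      in if hv = \<infinity> then cf1
         else (case old of
                 None \<Rightarrow> cf1\<lparr> c_open := add_mset (s', gval Ip' s', hv) (c_open cf) \<rparr>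
               | Some og \<Rightarrow>
                   (if og > gval Ip' s'
                    then cf1\<lparr> c_closed := c_closed cf - {s'},
                              c_open := add_mset (s', gval Ip' s', hv) (c_open cf) \<rparr>
                    else cf1)))"

text \<open>One iteration of the main loop (nondeterministic: ties in Open and the order of
  the outgoing transitions are arbitrary).\<close>
inductive da_step :: "('s, 'l) tsys \<Rightarrow> ('i, 's, 'l) isrc \<Rightarrow> ('s \<Rightarrow> 'i \<Rightarrow> ennreal) \<Rightarrow> bool \<Rightarrow>
    ('i, 's, 'l) conf \<Rightarrow> ('i, 's, 'l) res \<Rightarrow> bool"
  for TS \<sigma> h reeval where
  ds_empty: "c_open cf = {#} \<Longrightarrow> da_step TS \<sigma> h reeval cf Unsolvable"
| ds_closed: "e \<in># c_open cf \<Longrightarrow> (\<forall>e' \<in># c_open cf. okey e \<le> okey e') \<Longrightarrow> fst e \<in> c_closed cf \<Longrightarrow>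
     da_step TS \<sigma> h reeval cf (Run (cf\<lparr> c_open := c_open cf - {#e#} \<rparr>))"
| ds_reeval: "(s, gh, hh) \<in># c_open cf \<Longrightarrow> (\<forall>e' \<in># c_open cf. okey (s, gh, hh) \<le> okey e') \<Longrightarrow>
     s \<notin> c_closed cf \<Longrightarrow> Ih' = i_ref \<sigma> (c_Ih cf) s \<Longrightarrow> reeval \<Longrightarrow> hh < h s Ih' \<Longrightarrow>
     da_step TS \<sigma> h reeval cf
       (Run (cf\<lparr> c_Ih := Ih',
                 c_open := (if h s Ih' < \<infinity>
                            then add_mset (s, gval (c_Ip cf) s, h s Ih') (c_open cf - {#(s, gh, hh)#})
                            else c_open cf - {#(s, gh, hh)#}) \<rparr>))"
| ds_goal: "(s, gh, hh) \<in># c_open cf \<Longrightarrow> (\<forall>e' \<in># c_open cf. okey (s, gh, hh) \<le> okey e') \<Longrightarrow>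
     s \<notin> c_closed cf \<Longrightarrow> Ih' = i_ref \<sigma> (c_Ih cf) s \<Longrightarrow> \<not> (reeval \<and> hh < h s Ih') \<Longrightarrow>
     s \<in> ts_SG TS \<Longrightarrow> follow (c_Ip cf) (ts_sI TS) s es \<Longrightarrow>
     da_step TS \<sigma> h reeval cf (Ret es)"
| ds_expand: "(s, gh, hh) \<in># c_open cf \<Longrightarrow> (\<forall>e' \<in># c_open cf. okey (s, gh, hh) \<le> okey e') \<Longrightarrow>
     s \<notin> c_closed cf \<Longrightarrow> Ih' = i_ref \<sigma> (c_Ih cf) s \<Longrightarrow> \<not> (reeval \<and> hh < h s Ih') \<Longrightarrow>
     s \<notin> ts_SG TS \<Longrightarrow> distinct ts \<Longrightarrow> set ts = {t \<in> ts_T TS. fst t = s} \<Longrightarrow>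
     da_step TS \<sigma> h reeval cf
       (Run (fold (\<lambda>t c. process_trans TS \<sigma> h c t) ts
               (cf\<lparr> c_Ih := Ih', c_closed := insert s (c_closed cf),
                    c_open := c_open cf - {#(s, gh, hh)#} \<rparr>)))"

fun res_step :: "('s, 'l) tsys \<Rightarrow> ('i, 's, 'l) isrc \<Rightarrow> ('s \<Rightarrow> 'i \<Rightarrow> ennreal) \<Rightarrow> bool \<Rightarrow>
    ('i, 's, 'l) res \<Rightarrow> ('i, 's, 'l) res \<Rightarrow> bool" where
  "res_step TS \<sigma> h reeval (Run cf) r = da_step TS \<sigma> h reeval cf r"
| "res_step TS \<sigma> h reeval _ r = False"

definition dastar_returns :: "('s, 'l) tsys \<Rightarrow> ('i, 's, 'l) isrc \<Rightarrow> ('s \<Rightarrow> 'i \<Rightarrow> ennreal) \<Rightarrow> bool \<Rightarrow>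
    ('s \<times> 'l \<times> 's) list \<Rightarrow> bool" where
  "dastar_returns TS \<sigma> h reeval es =
     (res_step TS \<sigma> h reeval)\<^sup>*\<^sup>* (Run (init_conf TS \<sigma> h)) (Ret es)"

end

theory Submission
  imports Defs
begin

lemma upd_p_other: "x \<noteq> b \<Longrightarrow> upd_p TS \<iota> (a, l, b) x = \<iota> x"
  by (auto split: option.splits)

lemma upd_p_cases:
  "upd_p TS \<iota> (a, l, b) = \<iota> \<or>
   (\<iota> a \<noteq> None \<and> upd_p TS \<iota> (a, l, b) = \<iota>(b \<mapsto> (gval \<iota> a + ts_c TS l, Some (a, l, b))) \<and>
    (\<iota> b \<noteq> None \<longrightarrow> gval \<iota> a + ts_c TS l \<le> gval \<iota> b))"
  by (auto simp: gval_def split: option.splits)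

lemma upd_p_dom: "\<iota> a \<noteq> None \<Longrightarrow> upd_p TS \<iota> (a, l, b) b \<noteq> None"
  by (auto split: option.splits)

lemma upd_p_le: "\<iota> b \<noteq> None \<Longrightarrow> gval (upd_p TS \<iota> (a, l, b)) b \<le> gval \<iota> b"
  using upd_p_cases[of TS \<iota> a l b] by (auto simp: gval_def)

lemma upd_p_le2: "\<iota> a \<noteq> None \<Longrightarrow> gval (upd_p TS \<iota> (a, l, b)) b \<le> gval \<iota> a + ts_c TS l"
  by (auto simp: gval_def split: option.splits)

lemma path_from_append:
  "path_from TS u (es @ fs) w \<longleftrightarrow> (\<exists>v. path_from TS u es v \<and> path_from TS v fs w)"
  by (induction es arbitrary: u) auto

lemma path_cost_append: "path_cost TS (es @ fs) = path_cost TS es + path_cost TS fs"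
  by (simp add: path_cost_def)

lemma path_cost_Cons: "path_cost TS ((a,l,b) # es) = ts_c TS l + path_cost TS es"
  by (simp add: path_cost_def)

lemma path_cost_nonneg: "\<forall>l. ts_c TS l \<ge> 0 \<Longrightarrow> path_cost TS es \<ge> 0"
  unfolding path_cost_def by (induction es) auto

lemma hstar_le: "path_from TS s es t \<Longrightarrow> t \<in> ts_SG TS \<Longrightarrow> hstar TS s \<le> ennreal (path_cost TS es)"
  unfolding hstar_def by (rule Inf_lower) blast

lemma adm_le: "dyn_admissible TS \<sigma> h \<Longrightarrow> reach_info TS \<sigma> \<iota> K \<Longrightarrow> h s \<iota> \<le> hstar TS s"
  unfolding dyn_admissible_def reachable_info_def by blast


definition inv_gen :: "('s, 'l) tsys \<Rightarrow> ('i, 's, 'l) isrc \<Rightarrow> ('s \<times> 'l \<times> 's) set \<Rightarrow> ('i, 's, 'l) conf \<Rightarrow> bool" where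
"inv_gen TS \<sigma> A cf \<longleftrightarrow>
  reach_info TS \<sigma> (c_Ih cf) (c_known cf) \<and>
  (\<forall>x. (x \<in> c_known cf) = (c_Ip cf x \<noteq> None)) \<and>
  (\<forall>x v. c_Ip cf x = Some v \<longrightarrow> fst v \<ge> 0) \<and>
  ts_sI TS \<in> c_known cf \<and> gval (c_Ip cf) (ts_sI TS) \<le> 0 \<and>
  (\<forall>x g a l y. c_Ip cf x = Some (g, Some (a,l,y)) \<longrightarrow> y = x \<and> (a,l,x) \<in> ts_T TS \<and> a \<in> c_known cf \<and> gval (c_Ip cf) a + ts_c TS l \<le> g) \<and>
  (\<forall>e \<in># c_open cf. fst e \<in> c_known cf \<and> gval (c_Ip cf) (fst e) \<le> fst (snd e) \<and> snd (snd e) \<le> hstar TS (fst e)) \<and>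
  (\<forall>x \<in> c_known cf - c_closed cf. hstar TS x < \<infinity> \<longrightarrow> (\<exists>hh. (x, gval (c_Ip cf) x, hh) \<in># c_open cf)) \<and>
  (\<forall>x \<in> c_closed cf. hstar TS x < \<infinity> \<longrightarrow> (\<forall>l y. (x,l,y) \<in> ts_T TS \<longrightarrow> (x,l,y) \<in> A \<longrightarrow> y \<in> c_known cf \<and> gval (c_Ip cf) y \<le> gval (c_Ip cf) x + ts_c TS l)) \<and>
  c_closed cf \<inter> ts_SG TS = {} \<and> c_closed cf \<subseteq> c_known cf"

lemma step_generic:
  assumes cpos: "\<forall>l. ts_c TS l \<ge> 0" and adm: "dyn_admissible TS \<sigma> h"
    and inv: "inv_gen TS \<sigma> A cf" and tT: "(a,l,b) \<in> ts_T TS" and ak: "a \<in> c_known cf"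
    and Ip: "c_Ip r = upd_p TS (c_Ip cf) (a,l,b)"
    and Ih: "c_Ih r = i_upd \<sigma> (c_Ih cf) (a,l,b)"
    and kn: "c_known r = insert b (c_known cf)"
    and cl1: "c_closed r \<subseteq> c_closed cf" and cl2: "c_closed cf - c_closed r \<subseteq> {b}"
    and op: "\<forall>e \<in># c_open r. e \<in># c_open cf \<or> e = (b, gval (c_Ip r) b, h b (c_Ih r))"
    and op2: "\<forall>e \<in># c_open cf. e \<in># c_open r"
    and fb: "b \<notin> c_closed r \<Longrightarrow> hstar TS b < \<infinity> \<Longrightarrow> \<exists>hh. (b, gval (c_Ip r) b, hh) \<in># c_open r"
    and gb: "b \<in> c_closed r \<Longrightarrow> hstar TS b < \<infinity> \<Longrightarrow> gval (c_Ip r) b = gval (c_Ip cf) b"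
  shows "inv_gen TS \<sigma> (insert (a,l,b) A) r"
proof -
  let ?I = "c_Ip cf" and ?I' = "c_Ip r"
  let ?new = "?I(b \<mapsto> (gval ?I a + ts_c TS l, Some (a, l, b)))"
  let ?cnd = "?I b \<noteq> None \<longrightarrow> gval ?I a + ts_c TS l \<le> gval ?I b"
  note I0 = inv[unfolded inv_gen_def]
  note I = I0[THEN conjunct1]
    I0[THEN conjunct2, THEN conjunct1, rule_format]
    I0[THEN conjunct2, THEN conjunct2, THEN conjunct1, rule_format]
    I0[THEN conjunct2, THEN conjunct2, THEN conjunct2, THEN conjunct1]
    I0[THEN conjunct2, THEN conjunct2, THEN conjunct2, THEN conjunct2, THEN conjunct1]
    I0[THEN conjunct2, THEN conjunct2, THEN conjunct2, THEN conjunct2, THEN conjunct2, THEN conjunct1, rule_format]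
    I0[THEN conjunct2, THEN conjunct2, THEN conjunct2, THEN conjunct2, THEN conjunct2, THEN conjunct2, THEN conjunct1, rule_format]
    I0[THEN conjunct2, THEN conjunct2, THEN conjunct2, THEN conjunct2, THEN conjunct2, THEN conjunct2, THEN conjunct2, THEN conjunct1, rule_format]
    I0[THEN conjunct2, THEN conjunct2, THEN conjunct2, THEN conjunct2, THEN conjunct2, THEN conjunct2, THEN conjunct2, THEN conjunct2, THEN conjunct1, rule_format]
    I0[THEN conjunct2, THEN conjunct2, THEN conjunct2, THEN conjunct2, THEN conjunct2, THEN conjunct2, THEN conjunct2, THEN conjunct2, THEN conjunct2, THEN conjunct1]
    I0[THEN conjunct2, THEN conjunct2, THEN conjunct2, THEN conjunct2, THEN conjunct2, THEN conjunct2, THEN conjunct2, THEN conjunct2, THEN conjunct2, THEN conjunct2]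
  have ad: "?I a \<noteq> None" using I(2) ak by blast
  have oth: "\<And>x. x \<noteq> b \<Longrightarrow> ?I' x = ?I x" using Ip upd_p_other by metis
  have gvoth: "\<And>x. x \<noteq> b \<Longrightarrow> gval ?I' x = gval ?I x" using oth by (simp add: gval_def)
  have bd: "?I' b \<noteq> None" using Ip upd_p_dom ad by metis
  have ble: "b \<in> c_known cf \<Longrightarrow> gval ?I' b \<le> gval ?I b" using Ip upd_p_le I(2) by metis
  have ble2: "gval ?I' b \<le> gval ?I a + ts_c TS l" using Ip upd_p_le2 ad by metis
  have gdec: "\<And>x. x \<in> c_known cf \<Longrightarrow> gval ?I' x \<le> gval ?I x"
    subgoal for x using ble gvoth by (cases "x = b") auto done
  have ucases: "?I' = ?I \<or> (?I' = ?new \<and> ?cnd)"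
    using upd_p_cases[of TS ?I a l b] Ip by auto
  have reach': "reach_info TS \<sigma> (c_Ih r) (c_known r)"
    using ri_upd[OF I(1) tT ak] Ih kn by simp
  have knI: "\<And>x. (x \<in> c_known r) = (?I' x \<noteq> None)"
    subgoal for x using I(2) kn oth bd by (cases "x = b") auto done
  have nonneg: "\<And>x v. ?I' x = Some v \<Longrightarrow> fst v \<ge> 0"
  proof -
    fix x v assume "?I' x = Some v"
    then show "fst v \<ge> 0"
    proof (cases "x = b")
      case True
      from ucases show ?thesis
      proof
        assume "?I' = ?I" then show ?thesis using I(3) \<open>?I' x = Some v\<close> by simp
      next
        assume "?I' = ?new \<and> ?cnd"
        moreover obtain va where "?I a = Some va" using ad by blast
        ultimately show ?thesis using I(3)[of a va] cpos True \<open>?I' x = Some v\<close>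
          by (auto simp: gval_def)
      qed
    qed (use oth I(3) in auto)
  qed
  have sI: "gval ?I' (ts_sI TS) \<le> 0" using gdec[OF I(4)] I(5) by linarith
  have ptr: "\<And>x g a' l' y. ?I' x = Some (g, Some (a',l',y)) \<Longrightarrow> y = x \<and> (a',l',x) \<in> ts_T TS \<and> a' \<in> c_known r \<and> gval ?I' a' + ts_c TS l' \<le> g"
  proof -
    fix x g a' l' y assume H: "?I' x = Some (g, Some (a',l',y))"
    from ucases show "y = x \<and> (a',l',x) \<in> ts_T TS \<and> a' \<in> c_known r \<and> gval ?I' a' + ts_c TS l' \<le> g"
    proof
      assume "?I' = ?I"
      then show ?thesis using H I(6)[of x g a' l' y] kn by auto
    next
      assume U: "?I' = ?new \<and> ?cnd"
      show ?thesis
      proof (cases "x = b")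
        case True
        then have "g = gval ?I a + ts_c TS l" "a' = a" "l' = l" "y = b" using U H by auto
        moreover have "gval ?I' a \<le> gval ?I a" using gdec ak .
        ultimately show ?thesis using True tT kn ak by auto
      next
        case False
        then have "?I x = Some (g, Some (a',l',y))" using H oth by simp
        from I(6)[OF this] have "y = x \<and> (a',l',x) \<in> ts_T TS \<and> a' \<in> c_known cf \<and> gval ?I a' + ts_c TS l' \<le> g" .
        moreover then have "gval ?I' a' \<le> gval ?I a'" using gdec by blast
        ultimately show ?thesis using kn by auto
      qed
    qed
  qed
  have hvle: "h b (c_Ih r) \<le> hstar TS b" using adm_le[OF adm reach'] .
  have opn: "\<And>e. e \<in># c_open r \<Longrightarrow> fst e \<in> c_known r \<and> gval ?I' (fst e) \<le> fst (snd e) \<and> snd (snd e) \<le> hstar TS (fst e)"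
  proof -
    fix e assume "e \<in># c_open r"
    with op have "e \<in># c_open cf \<or> e = (b, gval (c_Ip r) b, h b (c_Ih r))" by blast
    then show "fst e \<in> c_known r \<and> gval ?I' (fst e) \<le> fst (snd e) \<and> snd (snd e) \<le> hstar TS (fst e)"
    proof
      assume "e \<in># c_open cf"
      from I(7)[OF this] gdec kn show ?thesis by force
    qed (use hvle kn in auto)
  qed
  have fI: "\<And>x. x \<in> c_known r \<Longrightarrow> x \<notin> c_closed r \<Longrightarrow> hstar TS x < \<infinity> \<Longrightarrow> (\<exists>hh. (x, gval ?I' x, hh) \<in># c_open r)"
  proof -
    fix x assume H: "x \<in> c_known r" "x \<notin> c_closed r" "hstar TS x < \<infinity>"
    show "\<exists>hh. (x, gval ?I' x, hh) \<in># c_open r"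
    proof (cases "x = b")
      case True then show ?thesis using fb H by blast
    next
      case False
      then have "x \<in> c_known cf - c_closed cf" using H kn cl2 by auto
      from I(8)[OF this H(3)] obtain hh where "(x, gval ?I x, hh) \<in># c_open cf" by blast
      then show ?thesis using op2 gvoth[OF False] by auto
    qed
  qed
  have gI: "\<And>x l' y. x \<in> c_closed r \<Longrightarrow> hstar TS x < \<infinity> \<Longrightarrow> (x,l',y) \<in> ts_T TS \<Longrightarrow> (x,l',y) \<in> insert (a,l,b) A \<Longrightarrow> y \<in> c_known r \<and> gval ?I' y \<le> gval ?I' x + ts_c TS l'"
  proof -
    fix x l' y assume H: "x \<in> c_closed r" "hstar TS x < \<infinity>" "(x,l',y) \<in> ts_T TS" "(x,l',y) \<in> insert (a,l,b) A"
    have xc: "x \<in> c_closed cf" using H cl1 by blast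
    have xk: "x \<in> c_known cf" using xc I(11) by blast
    have gx: "gval ?I' x = gval ?I x"
      using gvoth gb H by (cases "x = b") auto
    show "y \<in> c_known r \<and> gval ?I' y \<le> gval ?I' x + ts_c TS l'"
    proof (cases "(x,l',y) = (a,l,b)")
      case True
      then show ?thesis using ble2 gx kn by auto
    next
      case False
      then have "(x,l',y) \<in> A" using H by blast
      from I(9)[OF xc H(2) H(3) this] have "y \<in> c_known cf" "gval ?I y \<le> gval ?I x + ts_c TS l'" by auto
      then show ?thesis using gdec[of y] gx kn by auto
    qed
  qed
  have c9: "c_closed r \<inter> ts_SG TS = {}" using I(10) cl1 by blast
  have c10: "c_closed r \<subseteq> c_known r" using I(11) cl1 kn by blast
  have sIk: "ts_sI TS \<in> c_known r" using I(4) kn by simp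
  show ?thesis unfolding inv_gen_def
    apply (intro conjI)
    subgoal by (rule reach')
    subgoal using knI by blast
    subgoal using nonneg by blast
    subgoal by (rule sIk)
    subgoal by (rule sI)
    subgoal using ptr by blast
    subgoal using opn by blast
    subgoal using fI by blast
    subgoal using gI by blast
    subgoal by (rule c9)
    subgoal by (rule c10)
    done
qed


lemma inv_closed_known: "inv_gen TS \<sigma> A cf \<Longrightarrow> c_closed cf \<subseteq> c_known cf"
  unfolding inv_gen_def by (elim conjE) assumption

lemma inv_known_dom: "inv_gen TS \<sigma> A cf \<Longrightarrow> (x \<in> c_known cf) = (c_Ip cf x \<noteq> None)"
  unfolding inv_gen_def by (elim conjE) (erule allE)

lemma inv_entry: "inv_gen TS \<sigma> A cf \<Longrightarrow> x \<in> c_known cf - c_closed cf \<Longrightarrow> hstar TS x < \<infinity> \<Longrightarrow>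
   \<exists>hh. (x, gval (c_Ip cf) x, hh) \<in># c_open cf"
  unfolding inv_gen_def by (elim conjE) (erule ballE; simp)

lemma inv_reach: "inv_gen TS \<sigma> A cf \<Longrightarrow> reach_info TS \<sigma> (c_Ih cf) (c_known cf)"
  unfolding inv_gen_def by (elim conjE) assumption

lemma process_trans_inv:
  assumes cpos: "\<forall>l. ts_c TS l \<ge> 0" and adm: "dyn_admissible TS \<sigma> h"
    and inv: "inv_gen TS \<sigma> A cf" and tT: "(a,l,b) \<in> ts_T TS" and ak: "a \<in> c_known cf"
  shows "inv_gen TS \<sigma> (insert (a,l,b) A) (process_trans TS \<sigma> h cf (a,l,b))"
proof -
  define Ip' where "Ip' = upd_p TS (c_Ip cf) (a, l, b)"
  define Ih' where "Ih' = i_upd \<sigma> (c_Ih cf) (a, l, b)"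
  define cf1 where "cf1 = cf\<lparr> c_Ip := Ip', c_Ih := Ih', c_known := insert b (c_known cf) \<rparr>"
  define hv where "hv = h b Ih'"
  have reach': "reach_info TS \<sigma> Ih' (insert b (c_known cf))"
    unfolding Ih'_def by (rule ri_upd[OF inv_reach[OF inv] tT ak])
  have hvle: "hv \<le> hstar TS b" unfolding hv_def using adm_le[OF adm reach'] .
  have ad: "c_Ip cf a \<noteq> None" using inv_known_dom[OF inv] ak by blast
  have PT: "process_trans TS \<sigma> h cf (a,l,b) =
     (if hv = \<infinity> then cf1
         else (case (if b \<in> c_known cf then Some (gval (c_Ip cf) b) else None) of
                 None \<Rightarrow> cf1\<lparr> c_open := add_mset (b, gval Ip' b, hv) (c_open cf) \<rparr>
               | Some og \<Rightarrow>
                   (if og > gval Ip' b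
                    then cf1\<lparr> c_closed := c_closed cf - {b},
                              c_open := add_mset (b, gval Ip' b, hv) (c_open cf) \<rparr>
                    else cf1)))"
    unfolding process_trans.simps Let_def Ip'_def Ih'_def cf1_def hv_def by simp
  note G = step_generic[OF cpos adm inv tT ak]
  show ?thesis
  proof (cases "hv = \<infinity>")
    case True
    then have hs: "hstar TS b = \<infinity>" using hvle by (simp add: top_unique)
    show ?thesis unfolding PT using True
      by (simp, intro G) (auto simp: cf1_def Ip'_def Ih'_def hs)
  next
    case hvf: False
    show ?thesis
    proof (cases "b \<in> c_known cf")
      case False
      then have "b \<notin> c_closed cf" using inv_closed_known[OF inv] by blast
      then show ?thesis unfolding PT using hvf False
        by (simp, intro G) (auto simp: cf1_def Ip'_def Ih'_def hv_def)
    next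
      case bk: True
      have le: "gval Ip' b \<le> gval (c_Ip cf) b"
        unfolding Ip'_def by (rule upd_p_le) (use inv_known_dom[OF inv] bk in blast)
      show ?thesis
      proof (cases "gval (c_Ip cf) b > gval Ip' b")
        case True
        then show ?thesis unfolding PT using hvf bk
          by (simp, intro G) (auto simp: cf1_def Ip'_def Ih'_def hv_def)
      next
        case False
        then have eq: "gval Ip' b = gval (c_Ip cf) b" using le by linarith
        have fb: "b \<notin> c_closed cf \<Longrightarrow> hstar TS b < \<infinity> \<Longrightarrow> \<exists>hh. (b, gval (c_Ip cf) b, hh) \<in># c_open cf"
          using inv_entry[OF inv] bk by blast
        show ?thesis unfolding PT using hvf bk False
          by (simp, intro G) (use fb eq in \<open>auto simp: cf1_def Ip'_def Ih'_def hv_def\<close>)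
      qed
    qed
  qed
qed

lemma inv_genD:
  assumes inv: "inv_gen TS \<sigma> A cf"
  shows "reach_info TS \<sigma> (c_Ih cf) (c_known cf)"
    and "\<And>x. (x \<in> c_known cf) = (c_Ip cf x \<noteq> None)"
    and "\<And>x v. c_Ip cf x = Some v \<Longrightarrow> fst v \<ge> 0"
    and "ts_sI TS \<in> c_known cf"
    and "gval (c_Ip cf) (ts_sI TS) \<le> 0"
    and "\<And>x g a l y. c_Ip cf x = Some (g, Some (a,l,y)) \<Longrightarrow> y = x \<and> (a,l,x) \<in> ts_T TS \<and> a \<in> c_known cf \<and> gval (c_Ip cf) a + ts_c TS l \<le> g"
    and "\<And>e. e \<in># c_open cf \<Longrightarrow> fst e \<in> c_known cf \<and> gval (c_Ip cf) (fst e) \<le> fst (snd e) \<and> snd (snd e) \<le> hstar TS (fst e)"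
    and "\<And>x. x \<in> c_known cf - c_closed cf \<Longrightarrow> hstar TS x < \<infinity> \<Longrightarrow> (\<exists>hh. (x, gval (c_Ip cf) x, hh) \<in># c_open cf)"
    and "\<And>x l y. x \<in> c_closed cf \<Longrightarrow> hstar TS x < \<infinity> \<Longrightarrow> (x,l,y) \<in> ts_T TS \<Longrightarrow> (x,l,y) \<in> A \<Longrightarrow> y \<in> c_known cf \<and> gval (c_Ip cf) y \<le> gval (c_Ip cf) x + ts_c TS l"
    and "c_closed cf \<inter> ts_SG TS = {}"
    and "c_closed cf \<subseteq> c_known cf"
proof -
  note I0 = inv[unfolded inv_gen_def]
  show "reach_info TS \<sigma> (c_Ih cf) (c_known cf)" by (rule I0[THEN conjunct1])
  show "\<And>x. (x \<in> c_known cf) = (c_Ip cf x \<noteq> None)" by (rule I0[THEN conjunct2, THEN conjunct1, rule_format])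
  show "\<And>x v. c_Ip cf x = Some v \<Longrightarrow> fst v \<ge> 0" by (rule I0[THEN conjunct2, THEN conjunct2, THEN conjunct1, rule_format])
  show "ts_sI TS \<in> c_known cf" by (rule I0[THEN conjunct2, THEN conjunct2, THEN conjunct2, THEN conjunct1])
  show "gval (c_Ip cf) (ts_sI TS) \<le> 0" by (rule I0[THEN conjunct2, THEN conjunct2, THEN conjunct2, THEN conjunct2, THEN conjunct1])
  show "\<And>x g a l y. c_Ip cf x = Some (g, Some (a,l,y)) \<Longrightarrow> y = x \<and> (a,l,x) \<in> ts_T TS \<and> a \<in> c_known cf \<and> gval (c_Ip cf) a + ts_c TS l \<le> g" by (rule I0[THEN conjunct2, THEN conjunct2, THEN conjunct2, THEN conjunct2, THEN conjunct2, THEN conjunct1, rule_format])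
  show "\<And>e. e \<in># c_open cf \<Longrightarrow> fst e \<in> c_known cf \<and> gval (c_Ip cf) (fst e) \<le> fst (snd e) \<and> snd (snd e) \<le> hstar TS (fst e)" by (rule I0[THEN conjunct2, THEN conjunct2, THEN conjunct2, THEN conjunct2, THEN conjunct2, THEN conjunct2, THEN conjunct1, rule_format])
  show "\<And>x. x \<in> c_known cf - c_closed cf \<Longrightarrow> hstar TS x < \<infinity> \<Longrightarrow> (\<exists>hh. (x, gval (c_Ip cf) x, hh) \<in># c_open cf)" by (rule I0[THEN conjunct2, THEN conjunct2, THEN conjunct2, THEN conjunct2, THEN conjunct2, THEN conjunct2, THEN conjunct2, THEN conjunct1, rule_format])
  show "\<And>x l y. x \<in> c_closed cf \<Longrightarrow> hstar TS x < \<infinity> \<Longrightarrow> (x,l,y) \<in> ts_T TS \<Longrightarrow> (x,l,y) \<in> A \<Longrightarrow> y \<in> c_known cf \<and> gval (c_Ip cf) y \<le> gval (c_Ip cf) x + ts_c TS l" by (rule I0[THEN conjunct2, THEN conjunct2, THEN conjunct2, THEN conjunct2, THEN conjunct2, THEN conjunct2, THEN conjunct2, THEN conjunct2, THEN conjunct1, rule_format])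
  show "c_closed cf \<inter> ts_SG TS = {}" by (rule I0[THEN conjunct2, THEN conjunct2, THEN conjunct2, THEN conjunct2, THEN conjunct2, THEN conjunct2, THEN conjunct2, THEN conjunct2, THEN conjunct2, THEN conjunct1])
  show "c_closed cf \<subseteq> c_known cf" by (rule I0[THEN conjunct2, THEN conjunct2, THEN conjunct2, THEN conjunct2, THEN conjunct2, THEN conjunct2, THEN conjunct2, THEN conjunct2, THEN conjunct2, THEN conjunct2])
qed

lemma inv_genI:
  assumes "reach_info TS \<sigma> (c_Ih cf) (c_known cf)"
    and "\<And>x. (x \<in> c_known cf) = (c_Ip cf x \<noteq> None)"
    and "\<And>x v. c_Ip cf x = Some v \<Longrightarrow> fst v \<ge> 0"
    and "ts_sI TS \<in> c_known cf"
    and "gval (c_Ip cf) (ts_sI TS) \<le> 0"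
    and "\<And>x g a l y. c_Ip cf x = Some (g, Some (a,l,y)) \<Longrightarrow> y = x \<and> (a,l,x) \<in> ts_T TS \<and> a \<in> c_known cf \<and> gval (c_Ip cf) a + ts_c TS l \<le> g"
    and "\<And>e. e \<in># c_open cf \<Longrightarrow> fst e \<in> c_known cf \<and> gval (c_Ip cf) (fst e) \<le> fst (snd e) \<and> snd (snd e) \<le> hstar TS (fst e)"
    and "\<And>x. x \<in> c_known cf - c_closed cf \<Longrightarrow> hstar TS x < \<infinity> \<Longrightarrow> (\<exists>hh. (x, gval (c_Ip cf) x, hh) \<in># c_open cf)"
    and "\<And>x l y. x \<in> c_closed cf \<Longrightarrow> hstar TS x < \<infinity> \<Longrightarrow> (x,l,y) \<in> ts_T TS \<Longrightarrow> (x,l,y) \<in> A \<Longrightarrow> y \<in> c_known cf \<and> gval (c_Ip cf) y \<le> gval (c_Ip cf) x + ts_c TS l"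
    and "c_closed cf \<inter> ts_SG TS = {}"
    and "c_closed cf \<subseteq> c_known cf"
  shows "inv_gen TS \<sigma> A cf"
  unfolding inv_gen_def
  apply (intro conjI)
  subgoal using assms(1) by blast
  subgoal using assms(2) by blast
  subgoal using assms(3) by blast
  subgoal using assms(4) by blast
  subgoal using assms(5) by blast
  subgoal using assms(6) by blast
  subgoal using assms(7) by blast
  subgoal using assms(8) by blast
  subgoal using assms(9) by blast
  subgoal using assms(10) by blast
  subgoal using assms(11) by blast
  done

lemma in_diff_neq: "a \<noteq> b \<Longrightarrow> a \<in># M - {#b#} \<longleftrightarrow> a \<in># M"
  by (auto simp: in_diff_count)


lemma process_trans_known: "c_known (process_trans TS \<sigma> h cf (a,l,b)) = insert b (c_known cf)"
  by (simp add: Let_def split: option.splits)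

declare process_trans.simps[simp del]

lemma fold_inv:
  assumes cpos: "\<forall>l. ts_c TS l \<ge> 0" and adm: "dyn_admissible TS \<sigma> h"
  shows "inv_gen TS \<sigma> A cf \<Longrightarrow> set ts \<subseteq> ts_T TS \<Longrightarrow> (\<forall>t\<in>set ts. fst t \<in> c_known cf) \<Longrightarrow>
    inv_gen TS \<sigma> (A \<union> set ts) (fold (\<lambda>t c. process_trans TS \<sigma> h c t) ts cf)"
proof (induction ts arbitrary: A cf)
  case Nil then show ?case by (simp del: process_trans.simps)
next
  case (Cons t ts)
  obtain a l b where t: "t = (a,l,b)" by (cases t) auto
  have tT: "(a,l,b) \<in> ts_T TS" using Cons.prems(2) t by simp
  have ak: "a \<in> c_known cf" using Cons.prems(3) t by simp
  have i1: "inv_gen TS \<sigma> (insert t A) (process_trans TS \<sigma> h cf t)"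
    unfolding t by (rule process_trans_inv[OF cpos adm Cons.prems(1) tT ak])
  have kk: "c_known cf \<subseteq> c_known (process_trans TS \<sigma> h cf t)"
    unfolding t process_trans_known by blast
  have s2: "set ts \<subseteq> ts_T TS" using Cons.prems(2) by simp
  have s3: "\<forall>t'\<in>set ts. fst t' \<in> c_known (process_trans TS \<sigma> h cf t)" using Cons.prems(3) kk by auto
  have "inv_gen TS \<sigma> (insert t A \<union> set ts) (fold (\<lambda>t c. process_trans TS \<sigma> h c t) ts (process_trans TS \<sigma> h cf t))"
    using Cons.IH[OF i1 s2 s3] .
  then show ?case by simp
qed

lemma inv_gen_mono: "inv_gen TS \<sigma> A cf \<Longrightarrow> ts_T TS \<inter> A' \<subseteq> A \<Longrightarrow> inv_gen TS \<sigma> A' cf"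
proof -
  assume H: "inv_gen TS \<sigma> A cf" and S: "ts_T TS \<inter> A' \<subseteq> A"
  note I = inv_genD[OF H]
  show ?thesis
    apply (rule inv_genI)
    subgoal by (rule I(1))
    subgoal by (rule I(2))
    subgoal by (rule I(3))
    subgoal by (rule I(4))
    subgoal by (rule I(5))
    subgoal by (rule I(6))
    subgoal by (rule I(7))
    subgoal by (rule I(8))
    subgoal using I(9) S by blast
    subgoal by (rule I(10))
    subgoal by (rule I(11))
    done
qed

lemma init_inv:
  assumes adm: "dyn_admissible TS \<sigma> h"
  shows "inv_gen TS \<sigma> UNIV (init_conf TS \<sigma> h)"
proof -
  have r: "reach_info TS \<sigma> (i_0 \<sigma>) {ts_sI TS}" by (rule ri_init)
  have hl: "h (ts_sI TS) (i_0 \<sigma>) \<le> hstar TS (ts_sI TS)" using adm_le[OF adm r] .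
  have fin: "hstar TS (ts_sI TS) < \<infinity> \<Longrightarrow> h (ts_sI TS) (i_0 \<sigma>) < \<infinity>" using hl by (meson le_less_trans)
  show ?thesis
  proof (rule inv_genI)
    show "\<And>e. e \<in># c_open (init_conf TS \<sigma> h) \<Longrightarrow> fst e \<in> c_known (init_conf TS \<sigma> h) \<and> gval (c_Ip (init_conf TS \<sigma> h)) (fst e) \<le> fst (snd e) \<and> snd (snd e) \<le> hstar TS (fst e)"
      using hl by (simp add: init_conf_def gval_def split: if_splits)
    show "\<And>x. x \<in> c_known (init_conf TS \<sigma> h) - c_closed (init_conf TS \<sigma> h) \<Longrightarrow> hstar TS x < \<infinity> \<Longrightarrow> (\<exists>hh. (x, gval (c_Ip (init_conf TS \<sigma> h)) x, hh) \<in># c_open (init_conf TS \<sigma> h))"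
      using fin by (simp add: init_conf_def gval_def)
  qed (use r in \<open>auto simp: init_conf_def gval_def split: if_splits\<close>)
qed

lemma expand_inv:
  assumes cpos: "\<forall>l. ts_c TS l \<ge> 0" and adm: "dyn_admissible TS \<sigma> h"
    and inv: "inv_gen TS \<sigma> UNIV cf"
    and en: "(s, gh, hh) \<in># c_open cf" and nc: "s \<notin> c_closed cf" and ng: "s \<notin> ts_SG TS"
    and ts: "set ts = {t \<in> ts_T TS. fst t = s}"
  shows "inv_gen TS \<sigma> UNIV (fold (\<lambda>t c. process_trans TS \<sigma> h c t) ts
               (cf\<lparr> c_Ih := i_ref \<sigma> (c_Ih cf) s, c_closed := insert s (c_closed cf),
                    c_open := c_open cf - {#(s, gh, hh)#} \<rparr>))"
proof -
  let ?cf0 = "cf\<lparr> c_Ih := i_ref \<sigma> (c_Ih cf) s, c_closed := insert s (c_closed cf),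
                    c_open := c_open cf - {#(s, gh, hh)#} \<rparr>"
  note I = inv_genD[OF inv]
  have sk: "s \<in> c_known cf" using I(7)[OF en] by simp
  have i0: "inv_gen TS \<sigma> {t. fst t \<noteq> s} ?cf0"
  proof (rule inv_genI)
    show "reach_info TS \<sigma> (c_Ih ?cf0) (c_known ?cf0)" using ri_ref[OF I(1) sk] by simp
    show "\<And>e. e \<in># c_open ?cf0 \<Longrightarrow> fst e \<in> c_known ?cf0 \<and> gval (c_Ip ?cf0) (fst e) \<le> fst (snd e) \<and> snd (snd e) \<le> hstar TS (fst e)"
      using I(7) by (auto dest: in_diffD)
    show "\<And>x. x \<in> c_known ?cf0 - c_closed ?cf0 \<Longrightarrow> hstar TS x < \<infinity> \<Longrightarrow> (\<exists>hh. (x, gval (c_Ip ?cf0) x, hh) \<in># c_open ?cf0)"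
    proof -
      fix x assume H1: "x \<in> c_known ?cf0 - c_closed ?cf0" and H2: "hstar TS x < \<infinity>"
      have A1: "x \<in> c_known cf - c_closed cf" using H1 by simp
      have "x \<noteq> s" using H1 by simp
      from I(8)[OF A1 H2] obtain hh' where hin: "(x, gval (c_Ip cf) x, hh') \<in># c_open cf" by blast
      have ne: "(x, gval (c_Ip cf) x, hh') \<noteq> (s, gh, hh)" using \<open>x \<noteq> s\<close> by simp
      have "(x, gval (c_Ip cf) x, hh') \<in># c_open cf - {#(s, gh, hh)#}" using in_diff_neq[OF ne] hin by simp
      then show "\<exists>hh. (x, gval (c_Ip ?cf0) x, hh) \<in># c_open ?cf0" by auto
    qed
    show "\<And>x l y. x \<in> c_closed ?cf0 \<Longrightarrow> hstar TS x < \<infinity> \<Longrightarrow> (x,l,y) \<in> ts_T TS \<Longrightarrow> (x,l,y) \<in> {t. fst t \<noteq> s} \<Longrightarrow> y \<in> c_known ?cf0 \<and> gval (c_Ip ?cf0) y \<le> gval (c_Ip ?cf0) x + ts_c TS l"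
      using I(9) by auto
    show "\<And>x. (x \<in> c_known ?cf0) = (c_Ip ?cf0 x \<noteq> None)" using I(2) by simp
    show "\<And>x v. c_Ip ?cf0 x = Some v \<Longrightarrow> fst v \<ge> 0" using I(3) by simp
    show "ts_sI TS \<in> c_known ?cf0" using I(4) by simp
    show "gval (c_Ip ?cf0) (ts_sI TS) \<le> 0" using I(5) by simp
    show "\<And>x g a l y. c_Ip ?cf0 x = Some (g, Some (a,l,y)) \<Longrightarrow> y = x \<and> (a,l,x) \<in> ts_T TS \<and> a \<in> c_known ?cf0 \<and> gval (c_Ip ?cf0) a + ts_c TS l \<le> g"
      using I(6) by simp
    show "c_closed ?cf0 \<inter> ts_SG TS = {}" using I(10) ng by simp
    show "c_closed ?cf0 \<subseteq> c_known ?cf0" using I(11) sk by simp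
  qed
  have "inv_gen TS \<sigma> ({t. fst t \<noteq> s} \<union> set ts) (fold (\<lambda>t c. process_trans TS \<sigma> h c t) ts ?cf0)"
    by (rule fold_inv[OF cpos adm i0]) (use ts sk in auto)
  then show ?thesis by (rule inv_gen_mono) (use ts in auto)
qed


lemma closed_step_inv:
  assumes inv: "inv_gen TS \<sigma> UNIV cf" and e: "fst e \<in> c_closed cf"
  shows "inv_gen TS \<sigma> UNIV (cf\<lparr> c_open := c_open cf - {#e#} \<rparr>)"
proof -
  let ?cf = "cf\<lparr> c_open := c_open cf - {#e#} \<rparr>"
  note I = inv_genD[OF inv]
  show ?thesis
  proof (rule inv_genI)
    show "\<And>e'. e' \<in># c_open ?cf \<Longrightarrow> fst e' \<in> c_known ?cf \<and> gval (c_Ip ?cf) (fst e') \<le> fst (snd e') \<and> snd (snd e') \<le> hstar TS (fst e')"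
      using I(7) by (auto dest: in_diffD)
    show "\<And>x. x \<in> c_known ?cf - c_closed ?cf \<Longrightarrow> hstar TS x < \<infinity> \<Longrightarrow> (\<exists>hh. (x, gval (c_Ip ?cf) x, hh) \<in># c_open ?cf)"
    proof -
      fix x assume H1: "x \<in> c_known ?cf - c_closed ?cf" and H2: "hstar TS x < \<infinity>"
      have A1: "x \<in> c_known cf - c_closed cf" using H1 by simp
      from I(8)[OF A1 H2] obtain hh' where hin: "(x, gval (c_Ip cf) x, hh') \<in># c_open cf" by blast
      have ne: "(x, gval (c_Ip cf) x, hh') \<noteq> e" using A1 e by auto
      have "(x, gval (c_Ip cf) x, hh') \<in># c_open cf - {#e#}" using in_diff_neq[OF ne] hin by simp
      then show "\<exists>hh. (x, gval (c_Ip ?cf) x, hh) \<in># c_open ?cf" by auto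
    qed
    show "\<And>x. (x \<in> c_known ?cf) = (c_Ip ?cf x \<noteq> None)" using I(2) by simp
    show "\<And>x v. c_Ip ?cf x = Some v \<Longrightarrow> fst v \<ge> 0" using I(3) by simp
    show "ts_sI TS \<in> c_known ?cf" using I(4) by simp
    show "gval (c_Ip ?cf) (ts_sI TS) \<le> 0" using I(5) by simp
    show "\<And>x g a l y. c_Ip ?cf x = Some (g, Some (a,l,y)) \<Longrightarrow> y = x \<and> (a,l,x) \<in> ts_T TS \<and> a \<in> c_known ?cf \<and> gval (c_Ip ?cf) a + ts_c TS l \<le> g"
      using I(6) by simp
    show "\<And>x l y. x \<in> c_closed ?cf \<Longrightarrow> hstar TS x < \<infinity> \<Longrightarrow> (x,l,y) \<in> ts_T TS \<Longrightarrow> (x,l,y) \<in> UNIV \<Longrightarrow> y \<in> c_known ?cf \<and> gval (c_Ip ?cf) y \<le> gval (c_Ip ?cf) x + ts_c TS l"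
      using I(9) by simp
    show "c_closed ?cf \<inter> ts_SG TS = {}" using I(10) by simp
    show "c_closed ?cf \<subseteq> c_known ?cf" using I(11) by simp
    show "reach_info TS \<sigma> (c_Ih ?cf) (c_known ?cf)" using I(1) by simp
  qed
qed

lemma reeval_step_inv:
  assumes adm: "dyn_admissible TS \<sigma> h" and inv: "inv_gen TS \<sigma> UNIV cf"
    and en: "(s, gh, hh) \<in># c_open cf" and nc: "s \<notin> c_closed cf"
    and Ih': "Ih' = i_ref \<sigma> (c_Ih cf) s"
  shows "inv_gen TS \<sigma> UNIV (cf\<lparr> c_Ih := Ih',
                 c_open := (if h s Ih' < \<infinity>
                            then add_mset (s, gval (c_Ip cf) s, h s Ih') (c_open cf - {#(s, gh, hh)#})
                            else c_open cf - {#(s, gh, hh)#}) \<rparr>)"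
proof -
  let ?cf = "cf\<lparr> c_Ih := Ih',
                 c_open := (if h s Ih' < \<infinity>
                            then add_mset (s, gval (c_Ip cf) s, h s Ih') (c_open cf - {#(s, gh, hh)#})
                            else c_open cf - {#(s, gh, hh)#}) \<rparr>"
  note I = inv_genD[OF inv]
  have sk: "s \<in> c_known cf" using I(7)[OF en] by simp
  have r: "reach_info TS \<sigma> Ih' (c_known cf)" unfolding Ih' using ri_ref[OF I(1) sk] .
  have hl: "h s Ih' \<le> hstar TS s" using adm_le[OF adm r] .
  have opn: "\<And>e. e \<in># c_open ?cf \<Longrightarrow> e \<in># c_open cf \<or> e = (s, gval (c_Ip cf) s, h s Ih')"
    by (auto dest: in_diffD split: if_splits)
  show ?thesis
  proof (rule inv_genI)
    show "reach_info TS \<sigma> (c_Ih ?cf) (c_known ?cf)" using r by simp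
    show "\<And>e'. e' \<in># c_open ?cf \<Longrightarrow> fst e' \<in> c_known ?cf \<and> gval (c_Ip ?cf) (fst e') \<le> fst (snd e') \<and> snd (snd e') \<le> hstar TS (fst e')"
    proof -
      fix e' assume "e' \<in># c_open ?cf"
      from opn[OF this] show "fst e' \<in> c_known ?cf \<and> gval (c_Ip ?cf) (fst e') \<le> fst (snd e') \<and> snd (snd e') \<le> hstar TS (fst e')"
      proof
        assume "e' \<in># c_open cf" then show ?thesis using I(7) by simp
      qed (use sk hl in simp)
    qed
    show "\<And>x. x \<in> c_known ?cf - c_closed ?cf \<Longrightarrow> hstar TS x < \<infinity> \<Longrightarrow> (\<exists>hh. (x, gval (c_Ip ?cf) x, hh) \<in># c_open ?cf)"
    proof -
      fix x assume H1: "x \<in> c_known ?cf - c_closed ?cf" and H2: "hstar TS x < \<infinity>"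
      show "\<exists>hh. (x, gval (c_Ip ?cf) x, hh) \<in># c_open ?cf"
      proof (cases "x = s")
        case True
        have "h s Ih' < \<infinity>" using hl H2 True by (meson le_less_trans)
        then show ?thesis using True by (intro exI[of _ "h s Ih'"]) simp
      next
        case False
        have A1: "x \<in> c_known cf - c_closed cf" using H1 by simp
        from I(8)[OF A1 H2] obtain hh' where hin: "(x, gval (c_Ip cf) x, hh') \<in># c_open cf" by blast
        have ne: "(x, gval (c_Ip cf) x, hh') \<noteq> (s, gh, hh)" using False by simp
        have "(x, gval (c_Ip cf) x, hh') \<in># c_open cf - {#(s, gh, hh)#}" using in_diff_neq[OF ne] hin by simp
        then show ?thesis by auto
      qed
    qed
    show "\<And>x. (x \<in> c_known ?cf) = (c_Ip ?cf x \<noteq> None)" using I(2) by simp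
    show "\<And>x v. c_Ip ?cf x = Some v \<Longrightarrow> fst v \<ge> 0" using I(3) by simp
    show "ts_sI TS \<in> c_known ?cf" using I(4) by simp
    show "gval (c_Ip ?cf) (ts_sI TS) \<le> 0" using I(5) by simp
    show "\<And>x g a l y. c_Ip ?cf x = Some (g, Some (a,l,y)) \<Longrightarrow> y = x \<and> (a,l,x) \<in> ts_T TS \<and> a \<in> c_known ?cf \<and> gval (c_Ip ?cf) a + ts_c TS l \<le> g"
      using I(6) by simp
    show "\<And>x l y. x \<in> c_closed ?cf \<Longrightarrow> hstar TS x < \<infinity> \<Longrightarrow> (x,l,y) \<in> ts_T TS \<Longrightarrow> (x,l,y) \<in> UNIV \<Longrightarrow> y \<in> c_known ?cf \<and> gval (c_Ip ?cf) y \<le> gval (c_Ip ?cf) x + ts_c TS l"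
      using I(9) by simp
    show "c_closed ?cf \<inter> ts_SG TS = {}" using I(10) by simp
    show "c_closed ?cf \<subseteq> c_known ?cf" using I(11) by simp
  qed
qed


lemma follow_path:
  assumes inv: "inv_gen TS \<sigma> A cf"
  shows "follow (c_Ip cf) (ts_sI TS) s es \<Longrightarrow> path_from TS (ts_sI TS) es s \<and> path_cost TS es \<le> gval (c_Ip cf) s"
proof (induction rule: follow.induct)
  case fo_base
  note I = inv_genD[OF inv]
  obtain v where "c_Ip cf (ts_sI TS) = Some v" using I(2) I(4) by blast
  then have "gval (c_Ip cf) (ts_sI TS) \<ge> 0" using I(3) by (simp add: gval_def)
  then show ?case by (simp add: path_cost_def)
next
  case (fo_step s g a l es)
  note I = inv_genD[OF inv]
  from I(6)[OF fo_step.hyps(2)] have T: "(a,l,s) \<in> ts_T TS" and le: "gval (c_Ip cf) a + ts_c TS l \<le> g" by auto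
  have gs: "gval (c_Ip cf) s = g" using fo_step.hyps(2) by (simp add: gval_def)
  have "path_from TS (ts_sI TS) (es @ [(a,l,s)]) s"
    using fo_step.IH T by (auto simp: path_from_append)
  moreover have "path_cost TS (es @ [(a,l,s)]) \<le> gval (c_Ip cf) s"
    using fo_step.IH le gs by (simp add: path_cost_append path_cost_def)
  ultimately show ?case by blast
qed

lemma witness:
  assumes cpos: "\<forall>l. ts_c TS l \<ge> 0" and inv: "inv_gen TS \<sigma> UNIV cf"
  shows "path_from TS u es t \<Longrightarrow> t \<in> ts_SG TS \<Longrightarrow> u \<in> c_known cf \<Longrightarrow> gval (c_Ip cf) u \<le> p \<Longrightarrow>
    \<exists>v \<in> c_known cf - c_closed cf. ennreal (gval (c_Ip cf) v) + hstar TS v \<le> ennreal (p + path_cost TS es)"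
proof (induction es arbitrary: u p)
  note I = inv_genD[OF inv]
  have gnn: "\<And>x. x \<in> c_known cf \<Longrightarrow> gval (c_Ip cf) x \<ge> 0"
  proof -
    fix x assume "x \<in> c_known cf"
    then obtain v where "c_Ip cf x = Some v" using I(2) by blast
    then show "gval (c_Ip cf) x \<ge> 0" using I(3) by (simp add: gval_def)
  qed
  have here: "\<And>u es t p. path_from TS u es t \<Longrightarrow> t \<in> ts_SG TS \<Longrightarrow> u \<in> c_known cf \<Longrightarrow> gval (c_Ip cf) u \<le> p \<Longrightarrow>
      ennreal (gval (c_Ip cf) u) + hstar TS u \<le> ennreal (p + path_cost TS es)"
  proof -
    fix u es t p assume H: "path_from TS u es t" "t \<in> ts_SG TS" "u \<in> c_known cf" "gval (c_Ip cf) u \<le> p"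
    have "ennreal (gval (c_Ip cf) u) + hstar TS u \<le> ennreal (gval (c_Ip cf) u) + ennreal (path_cost TS es)"
      using hstar_le[OF H(1) H(2)] by (rule add_left_mono)
    also have "\<dots> = ennreal (gval (c_Ip cf) u + path_cost TS es)"
      using gnn[OF H(3)] path_cost_nonneg[OF cpos] by (simp add: ennreal_plus)
    also have "\<dots> \<le> ennreal (p + path_cost TS es)" using H(4) by (intro ennreal_leI) simp
    finally show "ennreal (gval (c_Ip cf) u) + hstar TS u \<le> ennreal (p + path_cost TS es)" .
  qed
  {
    case Nil
    then have "u = t" by simp
    then have "u \<notin> c_closed cf" using Nil.prems(2) I(10) by blast
    then show ?case using here[OF Nil.prems] Nil.prems(3) by blast
  next
    case (Cons e es)
    obtain a l b where e: "e = (a,l,b)" by (cases e) auto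
    show ?case
    proof (cases "u \<in> c_closed cf")
      case False
      then show ?thesis using here[OF Cons.prems] Cons.prems(3) by blast
    next
      case True
      have pf0: "a = u \<and> (a,l,b) \<in> ts_T TS \<and> path_from TS b es t" using Cons.prems(1) unfolding e path_from.simps by assumption
      note pf = pf0[THEN conjunct1] pf0[THEN conjunct2, THEN conjunct1] pf0[THEN conjunct2, THEN conjunct2]
      have "hstar TS u \<le> ennreal (path_cost TS (e # es))" using hstar_le[OF Cons.prems(1,2)] .
      then have fin: "hstar TS u < \<infinity>" unfolding infinity_ennreal_def by (rule order.strict_trans1[OF _ ennreal_less_top])
      from I(9)[OF True fin, of l b] pf have bk: "b \<in> c_known cf" and
        gb: "gval (c_Ip cf) b \<le> gval (c_Ip cf) u + ts_c TS l" by auto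
      have "gval (c_Ip cf) b \<le> p + ts_c TS l" using gb Cons.prems(4) by linarith
      from Cons.IH[OF pf(3) Cons.prems(2) bk this] obtain v where
        v: "v \<in> c_known cf - c_closed cf" "ennreal (gval (c_Ip cf) v) + hstar TS v \<le> ennreal (p + ts_c TS l + path_cost TS es)"
        by blast
      have "p + ts_c TS l + path_cost TS es = p + path_cost TS (e # es)" using e by (simp add: path_cost_Cons)
      then have "ennreal (gval (c_Ip cf) v) + hstar TS v \<le> ennreal (p + path_cost TS (e # es))"
        using v(2) by (metis add.assoc)
      then show ?thesis using v(1) by blast
    qed
  }
qed


lemma goal_ok:
  assumes cpos: "\<forall>l. ts_c TS l \<ge> 0" and inv: "inv_gen TS \<sigma> UNIV cf"
    and en: "(s, gh, hh) \<in># c_open cf" and mn: "\<forall>e' \<in># c_open cf. okey (s, gh, hh) \<le> okey e'"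
    and sg: "s \<in> ts_SG TS" and fo: "follow (c_Ip cf) (ts_sI TS) s es"
  shows "is_solution TS es \<and> ennreal (path_cost TS es) = hstar TS (ts_sI TS)"
proof -
  note I = inv_genD[OF inv]
  from follow_path[OF inv fo] have pth: "path_from TS (ts_sI TS) es s" and cle: "path_cost TS es \<le> gval (c_Ip cf) s"
    by auto
  have sol: "is_solution TS es" unfolding is_solution_def using pth sg by blast
  have gs: "gval (c_Ip cf) s \<le> gh" using I(7)[OF en] by simp
  have key: "ennreal (path_cost TS es) \<le> okey (s, gh, hh)"
  proof -
    have "ennreal (path_cost TS es) \<le> ennreal gh" using cle gs by (intro ennreal_leI) simp
    also have "\<dots> \<le> ennreal gh + hh" by (rule add_increasing2) simp_all
    finally show ?thesis by (simp add: okey_def)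
  qed
  have opt: "ennreal (path_cost TS es) \<le> ennreal (path_cost TS P)" if P: "path_from TS (ts_sI TS) P t" "t \<in> ts_SG TS" for P t
  proof -
    from witness[OF cpos inv P I(4) I(5)] obtain v where
      v: "v \<in> c_known cf - c_closed cf" "ennreal (gval (c_Ip cf) v) + hstar TS v \<le> ennreal (0 + path_cost TS P)"
      by blast
    have "hstar TS v \<le> ennreal (gval (c_Ip cf) v) + hstar TS v" by (rule add_increasing) simp_all
    also note v(2)
    finally have "hstar TS v < \<infinity>" unfolding infinity_ennreal_def by (rule order.strict_trans1[OF _ ennreal_less_top])
    from I(8)[OF v(1) this] obtain hh' where hin: "(v, gval (c_Ip cf) v, hh') \<in># c_open cf" by blast
    have hh'le: "hh' \<le> hstar TS v" using I(7)[OF hin] by simp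
    have "ennreal (path_cost TS es) \<le> okey (s, gh, hh)" by (rule key)
    also have "\<dots> \<le> okey (v, gval (c_Ip cf) v, hh')" using mn hin by blast
    also have "\<dots> = ennreal (gval (c_Ip cf) v) + hh'" by (simp add: okey_def)
    also have "\<dots> \<le> ennreal (gval (c_Ip cf) v) + hstar TS v" using hh'le by (rule add_left_mono)
    also have "\<dots> \<le> ennreal (path_cost TS P)" using v(2) by simp
    finally show ?thesis .
  qed
  have "ennreal (path_cost TS es) \<le> hstar TS (ts_sI TS)"
    unfolding hstar_def by (rule Inf_greatest) (use opt in blast)
  moreover have "hstar TS (ts_sI TS) \<le> ennreal (path_cost TS es)" by (rule hstar_le[OF pth sg])
  ultimately show ?thesis using sol by simp
qed

definition good_res where
  "good_res TS \<sigma> r = (case r of Run cf \<Rightarrow> inv_gen TS \<sigma> UNIV cf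
      | Ret es \<Rightarrow> is_solution TS es \<and> ennreal (path_cost TS es) = hstar TS (ts_sI TS)
      | Unsolvable \<Rightarrow> True)"

lemma da_step_good:
  assumes cpos: "\<forall>l. ts_c TS l \<ge> 0" and adm: "dyn_admissible TS \<sigma> h"
    and inv: "inv_gen TS \<sigma> UNIV cf" and st: "da_step TS \<sigma> h reeval cf r"
  shows "good_res TS \<sigma> r"
  using st
proof cases
  case ds_empty then show ?thesis by (simp add: good_res_def)
next
  case (ds_closed e)
  then show ?thesis using closed_step_inv[OF inv ds_closed(4)] by (simp add: good_res_def)
next
  case (ds_reeval s gh hh Ih')
  then show ?thesis using reeval_step_inv[OF adm inv ds_reeval(2) ds_reeval(4) ds_reeval(5)]
    by (simp add: good_res_def)
next
  case (ds_goal s gh hh Ih' es)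
  then show ?thesis using goal_ok[OF cpos inv ds_goal(2,3,7,8)] by (simp add: good_res_def)
next
  case (ds_expand s gh hh Ih' ts)
  have "inv_gen TS \<sigma> UNIV (fold (\<lambda>t c. process_trans TS \<sigma> h c t) ts
               (cf\<lparr> c_Ih := i_ref \<sigma> (c_Ih cf) s, c_closed := insert s (c_closed cf),
                    c_open := c_open cf - {#(s, gh, hh)#} \<rparr>))"
    by (rule expand_inv[OF cpos adm inv ds_expand(2) ds_expand(4) ds_expand(7) ds_expand(9)])
  then show ?thesis using ds_expand(1,5) by (simp add: good_res_def)
qed

theorem theorem5:
  fixes TS :: "('s::finite, 'l::finite) tsys"
    and \<sigma>h :: "('i, 's, 'l) isrc"
    and h :: "'s \<Rightarrow> 'i \<Rightarrow> ennreal"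
    and reeval :: bool
    and \<pi> :: "('s \<times> 'l \<times> 's) list"
  assumes "\<forall>l. ts_c TS l \<ge> 0"
    and "dyn_admissible TS \<sigma>h h"
    and "dastar_returns TS \<sigma>h h reeval \<pi>"
  shows "is_solution TS \<pi> \<and> ennreal (path_cost TS \<pi>) = hstar TS (ts_sI TS)"
proof -
  have "good_res TS \<sigma>h r" if "(res_step TS \<sigma>h h reeval)\<^sup>*\<^sup>* (Run (init_conf TS \<sigma>h h)) r" for r
    using that
  proof (induction rule: rtranclp_induct)
    case base then show ?case using init_inv[OF assms(2)] by (simp add: good_res_def)
  next
    case (step y z)
    show ?case
    proof (cases y)
      case (Run cf)
      then have "inv_gen TS \<sigma>h UNIV cf" using step.IH by (simp add: good_res_def)
      moreover have "da_step TS \<sigma>h h reeval cf z" using step.hyps(2) Run by simp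
      ultimately show ?thesis by (rule da_step_good[OF assms(1,2)])
    qed (use step.hyps(2) in simp_all)
  qed
  from this[OF assms(3)[unfolded dastar_returns_def]] show ?thesis by (simp add: good_res_def)
qed

end
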